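(* Let $T$ be a tree rooted at a vertex $r$, and let $x_1,\dots,x_t$ be the vertices of height one (non-root vertices all of whose children are leaves and which have at least one child). For each $i$, let $v_i$ be the non-leaf neighbor (parent) of $x_i$, let $k_i$ be the number of leaves adjacent to $v_i$, and let $r_i$ be the number of leaves adjacent to $x_i$. (1) If $k_i\ge1$ and $r_i\ge2$ for some $i$, then $b_{tR}(T)=1$. (2) If $k_i\ge 2$ and $r_i=1$ for some $i$, then $b_{tR}(T)\le \deg(v_i)-k_i$. (3) For integers $t\ge3$ and $2\le k\le t-1$, $b_{tR}(S(k,t))=t-k$.
   Context: A TRDF on $G=(V,E)$ is a function $f:V\to\{0,1,2\}$ such that every $v$ with $f(v)=0$ has a neighbor $u$ with $f(u)=2$ and the subgraph induced by $\{v:f(v)>0\}$ has no isolated vertices; $\gamma_{tR}(G)$ is its minimum weight. $b_{tR}(G)$ is the minimum $|E'|$ such that $G-E'$ has no isolated vertices and $\gamma_{tR}(G-E')>\gamma_{tR}(G)$ ($\infty$ if none). In a rooted tree, the height of a vertex $x$ is the length of a longest path from $x$ down to a leaf descendant. For $t\ge 2$, $k\ge1$, the wounded spider $S(k,t)$ is the star $K_{1,t}$ with $t-k$ of its edges subdivided once. *)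

theory Defs
  imports Main "HOL-Library.Extended_Nat"
begin

definition graph :: "'a set \<Rightarrow> 'a set set \<Rightarrow> bool" where
  "graph V E \<longleftrightarrow> finite V \<and> (\<forall>e\<in>E. \<exists>u v. e = {u, v} \<and> u \<noteq> v \<and> u \<in> V \<and> v \<in> V)"

definition adj :: "'a set set \<Rightarrow> 'a \<Rightarrow> 'a \<Rightarrow> bool" where
  "adj E u v \<longleftrightarrow> u \<noteq> v \<and> {u, v} \<in> E"

definition nbrs :: "'a set \<Rightarrow> 'a set set \<Rightarrow> 'a \<Rightarrow> 'a set" where
  "nbrs V E v = {u \<in> V. adj E v u}"

definition deg :: "'a set \<Rightarrow> 'a set set \<Rightarrow> 'a \<Rightarrow> nat" where
  "deg V E v = card (nbrs V E v)"

definition leaf :: "'a set \<Rightarrow> 'a set set \<Rightarrow> 'a \<Rightarrow> bool" where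
  "leaf V E v \<longleftrightarrow> v \<in> V \<and> deg V E v = 1"

definition no_isolated :: "'a set \<Rightarrow> 'a set set \<Rightarrow> bool" where
  "no_isolated V E \<longleftrightarrow> (\<forall>v\<in>V. \<exists>u\<in>V. adj E v u)"

definition walk :: "'a set \<Rightarrow> 'a set set \<Rightarrow> 'a list \<Rightarrow> bool" where
  "walk V E xs \<longleftrightarrow> xs \<noteq> [] \<and> set xs \<subseteq> V \<and> (\<forall>i. Suc i < length xs \<longrightarrow> adj E (xs ! i) (xs ! Suc i))"

definition connected_graph :: "'a set \<Rightarrow> 'a set set \<Rightarrow> bool" where
  "connected_graph V E \<longleftrightarrow> (\<forall>u\<in>V. \<forall>v\<in>V. \<exists>xs. walk V E xs \<and> hd xs = u \<and> last xs = v)"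

definition is_cycle :: "'a set \<Rightarrow> 'a set set \<Rightarrow> 'a list \<Rightarrow> bool" where
  "is_cycle V E xs \<longleftrightarrow> walk V E xs \<and> distinct xs \<and> length xs \<ge> 3 \<and> adj E (last xs) (hd xs)"

definition tree :: "'a set \<Rightarrow> 'a set set \<Rightarrow> bool" where
  "tree V E \<longleftrightarrow> graph V E \<and> V \<noteq> {} \<and> connected_graph V E \<and> \<not> (\<exists>xs. is_cycle V E xs)"

definition dist :: "'a set \<Rightarrow> 'a set set \<Rightarrow> 'a \<Rightarrow> 'a \<Rightarrow> nat" where
  "dist V E u v = (LEAST n. \<exists>xs. walk V E xs \<and> hd xs = u \<and> last xs = v \<and> length xs = Suc n)"

definition child :: "'a set \<Rightarrow> 'a set set \<Rightarrow> 'a \<Rightarrow> 'a \<Rightarrow> 'a \<Rightarrow> bool" where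
  "child V E r x y \<longleftrightarrow> x \<in> V \<and> y \<in> V \<and> adj E x y \<and> dist V E r y = Suc (dist V E r x)"

definition TRDF :: "'a set \<Rightarrow> 'a set set \<Rightarrow> ('a \<Rightarrow> nat) \<Rightarrow> bool" where
  "TRDF V E f \<longleftrightarrow> (\<forall>v\<in>V. f v \<le> 2)
     \<and> (\<forall>v\<in>V. f v = 0 \<longrightarrow> (\<exists>u\<in>V. adj E v u \<and> f u = 2))
     \<and> (\<forall>v\<in>V. f v > 0 \<longrightarrow> (\<exists>u\<in>V. adj E v u \<and> f u > 0))"

definition gamma_tR :: "'a set \<Rightarrow> 'a set set \<Rightarrow> nat" where
  "gamma_tR V E = (LEAST w. \<exists>f. TRDF V E f \<and> w = (\<Sum>v\<in>V. f v))"

definition bad_set :: "'a set \<Rightarrow> 'a set set \<Rightarrow> 'a set set \<Rightarrow> bool" where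
  "bad_set V E E' \<longleftrightarrow> E' \<subseteq> E \<and> no_isolated V (E - E') \<and> gamma_tR V (E - E') > gamma_tR V E"

definition b_tR :: "'a set \<Rightarrow> 'a set set \<Rightarrow> enat" where
  "b_tR V E = (if \<exists>E'. bad_set V E E'
               then enat (LEAST k. \<exists>E'. bad_set V E E' \<and> card E' = k) else \<infinity>)"

text \<open>Wounded spider S(k,t) on vertices {0..2t-k}: centre 0, the star leaves 1..t;
  for i in 1..t-k the edge {0,i} is subdivided by the new vertex t+i.\<close>

definition spider_V :: "nat \<Rightarrow> nat \<Rightarrow> nat set" where
  "spider_V k t = {0 .. t + (t - k)}"

definition spider_E :: "nat \<Rightarrow> nat \<Rightarrow> nat set set" where
  "spider_E k t = {{0, i} | i. t - k < i \<and> i \<le> t}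
                 \<union> {{0, t + i} | i. 1 \<le> i \<and> i \<le> t - k}
                 \<union> {{t + i, i} | i. 1 \<le> i \<and> i \<le> t - k}"

end

theory Submission
  imports Defs
begin


lemma adj_sym: "adj E u v \<longleftrightarrow> adj E v u"
  unfolding adj_def by (auto simp: insert_commute)

lemma adj_in_V: "graph V E \<Longrightarrow> adj E u v \<Longrightarrow> u \<in> V \<and> v \<in> V"
  unfolding graph_def adj_def by (metis doubleton_eq_iff)

lemma adj_diff: "adj (E - F) u v \<longleftrightarrow> adj E u v \<and> {u,v} \<notin> F"
  unfolding adj_def by auto

lemma graph_finite_E: "graph V E \<Longrightarrow> finite E"
proof -
  assume g: "graph V E"
  then have "E \<subseteq> Pow V" unfolding graph_def by auto
  moreover have "finite (Pow V)" using g graph_def by auto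
  ultimately show ?thesis by (rule finite_subset)
qed

lemma walk_alt: "walk V E xs \<longleftrightarrow> xs \<noteq> [] \<and> set xs \<subseteq> V \<and> successively (adj E) xs"
  unfolding walk_def successively_conv_nth by auto

lemma dist_le:
  assumes "walk V E xs" "hd xs = u" "last xs = w"
  shows "dist V E u w \<le> length xs - 1"
proof -
  have "length xs = Suc (length xs - 1)" using assms(1) walk_def by (cases xs) auto
  then show ?thesis unfolding dist_def using assms by (intro Least_le) blast
qed

lemma dist_ex:
  assumes "walk V E xs" "hd xs = u" "last xs = w"
  shows "\<exists>ys. walk V E ys \<and> hd ys = u \<and> last ys = w \<and> length ys = Suc (dist V E u w)"
proof -
  have "length xs = Suc (length xs - 1)" using assms(1) walk_def by (cases xs) auto
  then have "\<exists>n. \<exists>ys. walk V E ys \<and> hd ys = u \<and> last ys = w \<and> length ys = Suc n"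
    using assms by blast
  from LeastI_ex[OF this] show ?thesis unfolding dist_def by blast
qed

lemma walk_distinct:
  "walk V E xs \<Longrightarrow> \<exists>ys. walk V E ys \<and> distinct ys \<and> hd ys = hd xs \<and> last ys = last xs \<and> set ys \<subseteq> set xs"
proof (induction "length xs" arbitrary: xs rule: less_induct)
  case less
  show ?case
  proof (cases "distinct xs")
    case True then show ?thesis using less.prems by blast
  next
    case False
    then obtain as z bs cs where xs: "xs = as @ [z] @ bs @ [z] @ cs"
      using not_distinct_decomp by blast
    let ?ys = "as @ [z] @ cs"
    have w: "xs \<noteq> []" "set xs \<subseteq> V" "successively (adj E) xs" using less.prems unfolding walk_alt by auto
    have s1: "successively (adj E) (as @ [z])"
      using w(3) unfolding xs successively_append_iff by simp
    have s2: "successively (adj E) (z # cs)"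
      using w(3) unfolding xs successively_append_iff by (simp add: successively_Cons)
    have "successively (adj E) ((as @ [z]) @ cs)"
      using s1 s2 unfolding successively_append_iff successively_Cons by auto
    then have wy: "walk V E ?ys" using w unfolding walk_alt xs by auto
    have "length ?ys < length xs" using xs by simp
    from less.hyps[OF this wy] obtain ys where
      "walk V E ys \<and> distinct ys \<and> hd ys = hd ?ys \<and> last ys = last ?ys \<and> set ys \<subseteq> set ?ys" by blast
    moreover have "hd ?ys = hd xs" "last ?ys = last xs" "set ?ys \<subseteq> set xs" using xs
      by (cases as; auto)+
    ultimately show ?thesis by (metis subset_trans)
  qed
qed

lemma walk_take: "walk V E xs \<Longrightarrow> 0 < n \<Longrightarrow> walk V E (take n xs)"
  unfolding walk_def by (auto dest: in_set_takeD)

lemma no_cycle_nbrs: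
  assumes "tree V E" "adj E x a" "adj E x b" "a \<noteq> b" "walk (V - {x}) E p" "hd p = a" "last p = b"
  shows False
proof -
  obtain q where q: "walk (V - {x}) E q" "distinct q" "hd q = a" "last q = b" "set q \<subseteq> set p"
    using walk_distinct[OF assms(5)] assms(6,7) by auto
  have g: "graph V E" using assms(1) tree_def by auto
  have xV: "x \<in> V" using adj_in_V[OF g assms(2)] by auto
  have qne: "q \<noteq> []" using q walk_def by auto
  have len: "length q \<ge> 2"
  proof (rule ccontr)
    assume "\<not> length q \<ge> 2"
    then obtain c where "q = [c]" using qne by (cases q; cases "tl q"; auto)
    then show False using q assms(4) by auto
  qed
  have "is_cycle V E (x # q)"
    unfolding is_cycle_def walk_alt
  proof (intro conjI)
    show "successively (adj E) (x # q)" using q qne assms(2)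
      unfolding walk_alt successively_Cons by auto
    show "set (x # q) \<subseteq> V" using q xV unfolding walk_alt by auto
    show "distinct (x # q)" using q unfolding walk_alt by auto
    show "3 \<le> length (x # q)" using len by auto
    have "adj E b x" using assms(3) adj_sym by metis
    then show "adj E (last (x # q)) (hd (x # q))" using q qne by auto
  qed auto
  then show False using assms(1) unfolding tree_def by auto
qed

lemma shortest_avoid:
  assumes "walk V E P" "hd P = r" "last P = a" "length P = Suc (dist V E r a)"
    "dist V E r a \<le> dist V E r x" "x \<noteq> a"
  shows "x \<notin> set P"
proof
  assume "x \<in> set P"
  then obtain i where i: "i < length P" "P ! i = x" by (metis in_set_conv_nth)
  have w: "walk V E (take (Suc i) P)" using walk_take[OF assms(1)] by auto
  have "hd (take (Suc i) P) = r" using assms(2) i by (cases P) auto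
  moreover have "last (take (Suc i) P) = x" using i by (simp add: take_Suc_conv_app_nth)
  ultimately have "dist V E r x \<le> length (take (Suc i) P) - 1" using dist_le[OF w] by auto
  then have "dist V E r x \<le> i" using i by auto
  then have "i = dist V E r a" using assms(4,5) i by auto
  then have "P ! i = last P" using assms(4) i by (metis diff_Suc_1 last_conv_nth list.size(3) nat.distinct(1))
  then show False using i assms(3,6) by auto
qed

lemma tree_walk_ex:
  assumes "tree V E" "u \<in> V" "w \<in> V"
  shows "\<exists>P. walk V E P \<and> hd P = u \<and> last P = w \<and> length P = Suc (dist V E u w)"
  using assms dist_ex unfolding tree_def connected_graph_def by metis

lemma tree_two_low:
  assumes t: "tree V E" and r: "r \<in> V" and x: "x \<in> V" and "adj E x a" "adj E x b" "a \<noteq> b"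
    "dist V E r a \<le> dist V E r x" "dist V E r b \<le> dist V E r x"
  shows False
proof -
  have g: "graph V E" using t tree_def by auto
  have aV: "a \<in> V" and bV: "b \<in> V" using adj_in_V[OF g] assms by auto
  obtain P where P: "walk V E P" "hd P = r" "last P = a" "length P = Suc (dist V E r a)"
    using tree_walk_ex[OF t r aV] by auto
  obtain Q where Q: "walk V E Q" "hd Q = r" "last Q = b" "length Q = Suc (dist V E r b)"
    using tree_walk_ex[OF t r bV] by auto
  have xa: "x \<noteq> a" "x \<noteq> b" using assms(4,5) unfolding adj_def by auto
  have nP: "x \<notin> set P" using shortest_avoid[OF P] assms xa by auto
  have nQ: "x \<notin> set Q" using shortest_avoid[OF Q] assms xa by auto
  obtain Q' where Q': "Q = r # Q'" using Q walk_def by (cases Q) auto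
  have Pne: "P \<noteq> []" using P walk_def by auto
  let ?W = "rev P @ Q'"
  have "successively (adj E) ?W"
    unfolding successively_append_iff
  proof (intro conjI)
    have "(\<lambda>x y. adj E y x) = adj E" by (intro ext) (rule adj_sym)
    moreover have "successively (adj E) P" using P unfolding walk_alt by auto
    ultimately have "successively (\<lambda>x y. adj E y x) P" by (elim ssubst)
    then show "successively (adj E) (rev P)" by simp
    show "successively (adj E) Q'" using Q Q' unfolding walk_alt by (auto simp: successively_Cons)
    show "rev P = [] \<or> Q' = [] \<or> adj E (last (rev P)) (hd Q')"
      using Q Q' P Pne unfolding walk_alt by (auto simp: last_rev successively_Cons hd_rev)
  qed
  then have "walk (V - {x}) E ?W" using P Q Q' nP nQ Pne unfolding walk_alt by auto
  moreover have "hd ?W = a" using P Pne by (simp add: hd_rev)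
  moreover have "last ?W = b" using Q Q' P Pne by (cases "Q' = []") (auto simp: last_rev)
  ultimately show False using no_cycle_nbrs[OF t assms(4,5,6)] by blast
qed

lemma dist_adj_le:
  assumes t: "tree V E" and r: "r \<in> V" and x: "x \<in> V" and "adj E x u"
  shows "dist V E r u \<le> Suc (dist V E r x)"
proof -
  have g: "graph V E" using t tree_def by auto
  have uV: "u \<in> V" using adj_in_V[OF g assms(4)] by auto
  obtain P where P: "walk V E P" "hd P = r" "last P = x" "length P = Suc (dist V E r x)"
    using tree_walk_ex[OF t r x] by auto
  have "walk V E (P @ [u])" using P uV assms(4) unfolding walk_alt successively_append_iff by auto
  from dist_le[OF this] P show ?thesis by (cases P) auto
qed

lemma child_structure:
  assumes t: "tree V E" and r: "r \<in> V" and c: "child V E r v x" and "adj E x u" "u \<noteq> v"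
  shows "child V E r x u"
proof -
  have g: "graph V E" using t tree_def by auto
  have xV: "x \<in> V" and uV: "u \<in> V" using c child_def adj_in_V[OF g assms(4)] by auto
  have le: "dist V E r u \<le> Suc (dist V E r x)" using dist_adj_le[OF t r xV assms(4)] .
  have "\<not> dist V E r u \<le> dist V E r x"
  proof
    assume "dist V E r u \<le> dist V E r x"
    moreover have "dist V E r v \<le> dist V E r x" using c unfolding child_def by auto
    moreover have "adj E x v" using c child_def adj_sym by metis
    ultimately show False using tree_two_low[OF t r xV _ assms(4)] assms(5) by blast
  qed
  then show ?thesis using le xV uV assms(4) unfolding child_def by auto
qed




lemma gamma_le: "TRDF V E f \<Longrightarrow> gamma_tR V E \<le> sum f V"
  unfolding gamma_tR_def by (rule Least_le) blast

lemma TRDF_one: "no_isolated V E \<Longrightarrow> TRDF V E (\<lambda>_. 1)"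
  unfolding TRDF_def no_isolated_def by auto

lemma gamma_attained:
  assumes "no_isolated V E" shows "\<exists>f. TRDF V E f \<and> gamma_tR V E = sum f V"
proof -
  have "\<exists>w f. TRDF V E f \<and> w = sum f V" using TRDF_one[OF assms] by blast
  from LeastI_ex[OF this] show ?thesis unfolding gamma_tR_def by blast
qed

lemma gamma_increase:
  assumes "no_isolated V (E - F)"
    "\<And>h. TRDF V (E - F) h \<Longrightarrow> \<exists>g. TRDF V E g \<and> sum g V < sum h V"
  shows "gamma_tR V E < gamma_tR V (E - F)"
proof -
  obtain h where h: "TRDF V (E - F) h" "gamma_tR V (E - F) = sum h V"
    using gamma_attained[OF assms(1)] by blast
  obtain g where "TRDF V E g" "sum g V < sum h V" using assms(2)[OF h(1)] by blast
  then show ?thesis using gamma_le h(2) by (metis le_less_trans)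
qed

lemma sum_change:
  assumes "finite V" "D \<subseteq> V" "\<forall>w\<in>V-D. g w = h w"
  shows "sum g V + sum h D = sum h V + (sum g D :: nat)"
proof -
  have "sum g V = sum g (V - D) + sum g D" using assms by (metis sum.subset_diff)
  moreover have "sum h V = sum h (V - D) + sum h D" using assms by (metis sum.subset_diff)
  moreover have "sum g (V - D) = sum h (V - D)" using assms(3) by (intro sum.cong) auto
  ultimately show ?thesis by simp
qed

lemma patch:
  assumes "TRDF V E' h" "\<And>a b. adj E' a b \<Longrightarrow> adj E a b" "\<forall>w\<in>V. g w \<le> 2"
    "\<forall>w\<in>V-D. g w = h w" "\<forall>w\<in>V-D. \<forall>u\<in>V. adj E' w u \<longrightarrow> h u \<le> g u"
    "\<forall>w\<in>D\<inter>V. (g w = 0 \<longrightarrow> (\<exists>u\<in>V. adj E w u \<and> g u = 2)) \<and> (g w > 0 \<longrightarrow> (\<exists>u\<in>V. adj E w u \<and> g u > 0))"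
  shows "TRDF V E g"
  unfolding TRDF_def
proof (intro conjI ballI impI)
  fix w assume w: "w \<in> V"
  show "g w \<le> 2" using assms(3) w by auto
  {
    assume g0: "g w = 0"
    show "\<exists>u\<in>V. adj E w u \<and> g u = 2"
    proof (cases "w \<in> D")
      case True then show ?thesis using assms(6) w g0 by auto
    next
      case False
      then have "h w = 0" using assms(4) w g0 by auto
      then obtain u where u: "u \<in> V" "adj E' w u" "h u = 2" using assms(1) w unfolding TRDF_def by blast
      have "w \<in> V - D" using w False by blast
      then have "h u \<le> g u" using assms(5) u by blast
      moreover have "g u \<le> 2" using assms(3) u by blast
      ultimately have "g u = 2" using u by linarith
      then show ?thesis using assms(2) u by blast
    qed
  }
  {
    assume g0: "g w > 0"
    show "\<exists>u\<in>V. adj E w u \<and> g u > 0"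
    proof (cases "w \<in> D")
      case True then show ?thesis using assms(6) w g0 by auto
    next
      case False
      then have "h w > 0" using assms(4) w g0 by auto
      then obtain u where u: "u \<in> V" "adj E' w u" "h u > 0" using assms(1) w unfolding TRDF_def by blast
      have "w \<in> V - D" using w False by blast
      then have "h u \<le> g u" using assms(5) u by blast
      then have "g u > 0" using u by linarith
      then show ?thesis using assms(2) u by blast
    qed
  }
qed

lemma star:
  assumes "TRDF V E' h" "c \<in> V" "\<forall>u. adj E' c u \<longrightarrow> u \<in> S"
    "\<forall>l\<in>S. l \<in> V \<and> adj E' l c \<and> (\<forall>u. adj E' l u \<longrightarrow> u = c)"
    "l1 \<in> S" "l2 \<in> S" "l1 \<noteq> l2"
  shows "\<exists>m1 m2. m1 \<in> S \<and> m2 \<in> S \<and> m1 \<noteq> m2 \<and> h c + h m1 + h m2 \<ge> 3"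
proof -
  have T2: "\<And>v. v\<in>V \<Longrightarrow> h v = 0 \<Longrightarrow> (\<exists>u\<in>V. adj E' v u \<and> h u = 2)"
     and T3: "\<And>v. v\<in>V \<Longrightarrow> h v > 0 \<Longrightarrow> (\<exists>u\<in>V. adj E' v u \<and> h u > 0)"
    using assms(1) unfolding TRDF_def by auto
  have nb: "\<And>l u. l \<in> S \<Longrightarrow> adj E' l u \<Longrightarrow> u = c" using assms(4) by blast
  have lV: "\<And>l. l \<in> S \<Longrightarrow> l \<in> V" using assms(4) by blast
  have leafpos: "h l \<ge> 1" if lS: "l \<in> S" and c2: "h c \<noteq> 2" for l
  proof (rule ccontr)
    assume "\<not> h l \<ge> 1"
    then have "h l = 0" by auto
    then obtain u where u: "adj E' l u" "h u = 2" using T2 lV lS by blast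
    then have "u = c" using nb lS by blast
    then show False using u c2 by simp
  qed
  have cpos: "h c > 0"
  proof (rule ccontr)
    assume "\<not> h c > 0"
    then have c0: "h c = 0" by auto
    have "h l1 > 0" using leafpos[OF assms(5)] c0 by auto
    then obtain u where u: "adj E' l1 u" "h u > 0" using T3 lV assms(5) by blast
    then have "u = c" using nb assms(5) by blast
    then show False using u c0 by simp
  qed
  show ?thesis
  proof (cases "h c = 2")
    case True
    then obtain u where u: "adj E' c u" "h u > 0" using T3 assms(2) by fastforce
    then have uS: "u \<in> S" using assms(3) by blast
    show ?thesis
    proof (cases "u = l1")
      case True
      then have "u \<in> S \<and> l2 \<in> S \<and> u \<noteq> l2 \<and> h c + h u + h l2 \<ge> 3"
        using uS u assms(6,7) \<open>h c = 2\<close> by auto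
      then show ?thesis by blast
    next
      case False
      then have "u \<in> S \<and> l1 \<in> S \<and> u \<noteq> l1 \<and> h c + h u + h l1 \<ge> 3"
        using uS u assms(5) \<open>h c = 2\<close> by auto
      then show ?thesis by blast
    qed
  next
    case False
    then have "h c + h l1 + h l2 \<ge> 3"
      using leafpos[OF assms(5) False] leafpos[OF assms(6) False] cpos by linarith
    then show ?thesis using assms(5-7) by blast
  qed
qed

lemma leaf_nbr:
  assumes "graph V E" "leaf V E a" "adj E a v" "adj E a u" shows "u = v"
proof -
  have "finite (nbrs V E a)" using assms(1) unfolding graph_def nbrs_def by auto
  moreover have "card (nbrs V E a) = 1" using assms(2) unfolding leaf_def deg_def by auto
  moreover have "v \<in> nbrs V E a" "u \<in> nbrs V E a" using assms adj_in_V[OF assms(1)] unfolding nbrs_def by auto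
  ultimately show ?thesis by (metis card_1_singletonE singletonD)
qed

lemma adj_symD: "adj E u v \<Longrightarrow> adj E v u" using adj_sym by metis

lemma leaf_in_V: "leaf V E a \<Longrightarrow> a \<in> V" unfolding leaf_def by auto




lemma core1:
  assumes g: "graph V E" and hn: "\<forall>w\<in>V. \<exists>u\<in>V. adj E w u"
    and vx: "adj E v x" and va: "adj E v a" and la: "leaf V E a" and ax: "a \<noteq> x"
    and l12: "l1 \<noteq> l2" "adj E x l1" "adj E x l2" "l1 \<noteq> v" "l2 \<noteq> v"
    and xn: "\<forall>u. adj E x u \<longrightarrow> u \<noteq> v \<longrightarrow> leaf V E u"
  shows "bad_set V E {{v, x}}"
proof -
  let ?E2 = "E - {{v, x}}"
  have A: "adj ?E2 p q \<longleftrightarrow> adj E p q \<and> {p, q} \<noteq> {v, x}" for p q by (simp add: adj_diff)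
  have vnx: "v \<noteq> x" using vx unfolding adj_def by auto
  have xV: "x \<in> V" and vV: "v \<in> V" using adj_in_V[OF g vx] by auto
  have pair: "{p, q} = {v, x} \<longleftrightarrow> (p = v \<and> q = x) \<or> (p = x \<and> q = v)" for p q
    by (auto simp: doubleton_eq_iff)
  let ?S = "{u. adj E x u \<and> u \<noteq> v}"
  have S_leaf: "\<And>l u. l \<in> ?S \<Longrightarrow> adj E l u \<Longrightarrow> u = x"
  proof -
    fix l u assume l: "l \<in> ?S" and lu: "adj E l u"
    have lx: "adj E x l" "l \<noteq> v" using l by auto
    have ll: "leaf V E l" using xn lx by blast
    have "adj E l x" using lx(1) by (rule adj_symD)
    from leaf_nbr[OF g ll this lu] show "u = x" .
  qed
  have av: "adj E a v" using va by (rule adj_symD)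
  have a_nb: "\<And>u. adj E a u \<Longrightarrow> u = v" using leaf_nbr[OF g la av] by blast
  have noiso: "no_isolated V ?E2"
    unfolding no_isolated_def
  proof
    fix w assume w: "w \<in> V"
    then obtain u where u: "u \<in> V" "adj E w u" using hn by blast
    show "\<exists>u\<in>V. adj ?E2 w u"
    proof (cases "{w, u} = {v, x}")
      case False then show ?thesis using u A by blast
    next
      case True
      then have "(w = v \<and> u = x) \<or> (w = x \<and> u = v)" using pair by blast
      then show ?thesis
      proof
        assume "w = v \<and> u = x"
        then have "adj ?E2 w a" using A va ax pair by auto
        then show ?thesis using adj_in_V[OF g va] by blast
      next
        assume "w = x \<and> u = v"
        then have "adj ?E2 w l1" using A l12 pair vnx by auto
        then show ?thesis using adj_in_V[OF g l12(2)] by blast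
      qed
    qed
  qed
  have main: "\<exists>g. TRDF V E g \<and> sum g V < sum h V" if h: "TRDF V ?E2 h" for h
  proof -
    have T2: "\<And>w. w\<in>V \<Longrightarrow> h w = 0 \<Longrightarrow> (\<exists>u\<in>V. adj ?E2 w u \<and> h u = 2)"
     and T3: "\<And>w. w\<in>V \<Longrightarrow> h w > 0 \<Longrightarrow> (\<exists>u\<in>V. adj ?E2 w u \<and> h u > 0)"
     and T1: "\<And>w. w\<in>V \<Longrightarrow> h w \<le> 2"
      using h unfolding TRDF_def by auto
    have st: "\<forall>u. adj ?E2 x u \<longrightarrow> u \<in> ?S" using A pair vnx by auto
    have st2: "\<forall>l\<in>?S. l \<in> V \<and> adj ?E2 l x \<and> (\<forall>u. adj ?E2 l u \<longrightarrow> u = x)"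
    proof
      fix l assume l: "l \<in> ?S"
      have lV: "l \<in> V" using l adj_in_V[OF g] by blast
      have lx: "adj E x l" "l \<noteq> v" using l by auto
      have "adj E l x" using lx(1) by (rule adj_symD)
      then have l2: "adj ?E2 l x" using A pair lx(2) by auto
      have l3: "\<forall>u. adj ?E2 l u \<longrightarrow> u = x" using S_leaf l A by blast
      show "l \<in> V \<and> adj ?E2 l x \<and> (\<forall>u. adj ?E2 l u \<longrightarrow> u = x)" using lV l2 l3 by blast
    qed
    obtain m1 m2 where m: "m1 \<in> ?S" "m2 \<in> ?S" "m1 \<noteq> m2" "h x + h m1 + h m2 \<ge> 3"
      using star[OF h xV st st2, of l1 l2] l12 by auto
    have hv: "h v > 0"
    proof (rule ccontr)
      assume "\<not> h v > 0"
      then have hv0: "h v = 0" by auto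
      have aV: "a \<in> V" by (rule leaf_in_V[OF la])
      show False
      proof (cases "h a = 0")
        case True
        then obtain u where u: "adj ?E2 a u" "h u = 2" using T2 aV by blast
        then have "adj E a u" using A by blast
        then have "u = v" by (rule a_nb)
        then show False using u hv0 by simp
      next
        case False
        then obtain u where u: "adj ?E2 a u" "h u > 0" using T3 aV by blast
        then have "adj E a u" using A by blast
        then have "u = v" by (rule a_nb)
        then show False using u hv0 by simp
      qed
    qed
    define g where "g = (\<lambda>w. if w = x then 2 else if w = m1 \<or> w = m2 then 0 else h w)"
    let ?D = "{x, m1, m2}"
    have xm: "x \<noteq> m1" "x \<noteq> m2" using m unfolding adj_def by auto
    have DV: "?D \<subseteq> V" using xV m adj_in_V[OF g] by blast
    have mnb: "u = x" if i: "i \<in> {m1, m2}" and ui: "adj ?E2 u i" for i u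
    proof -
      have "adj ?E2 i u" using ui by (rule adj_symD)
      moreover have "i \<in> ?S" using i m by blast
      ultimately show "u = x" using st2 by blast
    qed
    have gT: "TRDF V E g"
    proof (rule patch[OF h, of E _ ?D])
      show "\<And>a b. adj ?E2 a b \<Longrightarrow> adj E a b" using A by blast
      show "\<forall>w\<in>V. g w \<le> 2" using T1 unfolding g_def by auto
      show "\<forall>w\<in>V-?D. g w = h w" unfolding g_def by auto
      show "\<forall>w\<in>V-?D. \<forall>u\<in>V. adj ?E2 w u \<longrightarrow> h u \<le> g u"
      proof (intro ballI impI)
        fix w u assume w: "w \<in> V - ?D" and u: "u \<in> V" and wu: "adj ?E2 w u"
        have "u \<noteq> m1" "u \<noteq> m2" using mnb[of u w] wu w by auto
        then show "h u \<le> g u" using T1[OF u] unfolding g_def by auto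
      qed
      have gv: "g v = h v" using m vnx unfolding g_def by auto
      have xv: "adj E x v" by (rule adj_symD[OF vx])
      have "adj E x m1" "adj E x m2" using m by auto
      then have mx: "adj E m1 x" "adj E m2 x" by (auto intro: adj_symD)
      show "\<forall>w\<in>?D\<inter>V. (g w = 0 \<longrightarrow> (\<exists>u\<in>V. adj E w u \<and> g u = 2)) \<and> (g w > 0 \<longrightarrow> (\<exists>u\<in>V. adj E w u \<and> g u > 0))"
      proof
        fix w assume w: "w \<in> ?D \<inter> V"
        show "(g w = 0 \<longrightarrow> (\<exists>u\<in>V. adj E w u \<and> g u = 2)) \<and> (g w > 0 \<longrightarrow> (\<exists>u\<in>V. adj E w u \<and> g u > 0))"
        proof (cases "w = x")
          case True
          have gw: "g w = 2" using True unfolding g_def by simp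
          have "g v > 0" using gv hv by simp
          then have "\<exists>u\<in>V. adj E w u \<and> g u > 0" using xv vV True by blast
          with gw show ?thesis by simp
        next
          case False
          then have wm: "w = m1 \<or> w = m2" using w by auto
          then have gw: "g w = 0" using False unfolding g_def by auto
          have gx: "g x = 2" unfolding g_def by simp
          have "adj E w x" using wm mx by auto
          then have "\<exists>u\<in>V. adj E w u \<and> g u = 2" using gx xV by blast
          with gw show ?thesis by simp
        qed
      qed
    qed
    have fin: "finite V" using g unfolding graph_def by auto
    have eqo: "\<forall>w\<in>V-?D. g w = h w" unfolding g_def by auto
    have "sum g V + sum h ?D = sum h V + sum g ?D"
      using sum_change[OF fin DV eqo] .
    moreover have "sum h ?D = h x + h m1 + h m2" using xm m(3) by simp
    moreover have "sum g ?D = 2" using xm m(3) unfolding g_def by simp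
    ultimately have "sum g V < sum h V" using m(4) by linarith
    then show ?thesis using gT by blast
  qed
  have "gamma_tR V E < gamma_tR V ?E2" using gamma_increase[OF noiso main] by blast
  moreover have "{{v, x}} \<subseteq> E" using vx unfolding adj_def by auto
  ultimately show ?thesis unfolding bad_set_def using noiso by blast
qed




lemma core2:
  assumes g: "graph V E" and hn: "\<forall>w\<in>V. \<exists>u\<in>V. adj E w u"
    and vx: "adj E v x" and xy: "adj E x y" and ly: "leaf V E y" and yv: "y \<noteq> v"
    and xnl: "\<not> leaf V E x"
    and l12: "l1 \<noteq> l2" "adj E v l1" "adj E v l2" "leaf V E l1" "leaf V E l2"
  shows "bad_set V E {{v, w} | w. w \<in> nbrs V E v \<and> \<not> leaf V E w}"
proof -
  define F where "F = {{v, w} | w. w \<in> nbrs V E v \<and> \<not> leaf V E w}"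
  let ?E2 = "E - F"
  have vnx: "v \<noteq> x" using vx unfolding adj_def by auto
  have xV: "x \<in> V" and vV: "v \<in> V" using adj_in_V[OF g vx] by auto
  have yV: "y \<in> V" using adj_in_V[OF g xy] by auto
  have FE: "F \<subseteq> E" unfolding F_def nbrs_def adj_def by auto
  have Fchar: "{p, q} \<in> F \<longleftrightarrow> (p = v \<and> \<not> leaf V E q) \<or> (q = v \<and> \<not> leaf V E p)"
    if pq: "adj E p q" for p q
  proof
    assume "{p, q} \<in> F"
    then obtain w where w: "{p, q} = {v, w}" "\<not> leaf V E w" unfolding F_def by blast
    then show "(p = v \<and> \<not> leaf V E q) \<or> (q = v \<and> \<not> leaf V E p)"
      by (auto simp: doubleton_eq_iff)
  next
    have pV: "p \<in> V" and qV: "q \<in> V" using adj_in_V[OF g pq] by auto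
    assume "(p = v \<and> \<not> leaf V E q) \<or> (q = v \<and> \<not> leaf V E p)"
    then show "{p, q} \<in> F"
    proof
      assume a: "p = v \<and> \<not> leaf V E q"
      then have "q \<in> nbrs V E v" using pq qV unfolding nbrs_def by auto
      then show ?thesis using a unfolding F_def by blast
    next
      assume a: "q = v \<and> \<not> leaf V E p"
      have "adj E q p" using pq by (rule adj_symD)
      then have "p \<in> nbrs V E v" using a pV unfolding nbrs_def by auto
      moreover have "{p, q} = {v, p}" using a by auto
      ultimately show ?thesis using a unfolding F_def by blast
    qed
  qed
  have A: "adj ?E2 p q \<longleftrightarrow> adj E p q \<and> {p, q} \<notin> F" for p q by (simp add: adj_diff)
  let ?S = "{u. adj E v u \<and> leaf V E u}"
  have S_nb: "u = v" if l: "l \<in> ?S" and lu: "adj E l u" for l u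
  proof -
    have "adj E v l" using l by auto
    then have "adj E l v" by (rule adj_symD)
    moreover have "leaf V E l" using l by auto
    ultimately show "u = v" using leaf_nbr[OF g _ _ lu] by blast
  qed
  have yx: "adj E y x" using xy by (rule adj_symD)
  have y_nb: "u = x" if "adj E y u" for u using leaf_nbr[OF g ly yx that] .
  have l1x: "leaf V E l1 \<and> l1 \<noteq> v" using l12 unfolding adj_def by auto
  have noiso: "no_isolated V ?E2"
    unfolding no_isolated_def
  proof
    fix w assume w: "w \<in> V"
    show "\<exists>u\<in>V. adj ?E2 w u"
    proof (cases "w = v")
      case True
      have "{v, l1} \<notin> F" using Fchar[OF l12(2)] l1x by auto
      then have "adj ?E2 v l1" using A l12(2) by blast
      then show ?thesis using True adj_in_V[OF g l12(2)] by blast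
    next
      case wv: False
      show ?thesis
      proof (cases "adj E v w \<and> \<not> leaf V E w")
        case True
        have fin: "finite (nbrs V E w)" using g unfolding graph_def nbrs_def by auto
        have wv': "adj E w v" using True[THEN conjunct1] by (rule adj_symD)
        then have vin: "v \<in> nbrs V E w" using vV unfolding nbrs_def by auto
        have "\<exists>u\<in>nbrs V E w. u \<noteq> v"
        proof (rule ccontr)
          assume na: "\<not> (\<exists>u\<in>nbrs V E w. u \<noteq> v)"
          have "nbrs V E w \<subseteq> {v}" using na by blast
          then have "nbrs V E w = {v}" using vin by blast
          then have "leaf V E w" using w unfolding leaf_def deg_def by simp
          then show False using True by blast
        qed
        then obtain u where u: "u \<in> nbrs V E w" "u \<noteq> v" by blast
        then have wu: "adj E w u" "u \<in> V" unfolding nbrs_def by auto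
        have "{w, u} \<notin> F" using Fchar[OF wu(1)] wv u(2) by auto
        then show ?thesis using A wu by blast
      next
        case False
        obtain u where u: "u \<in> V" "adj E w u" using hn w by blast
        have "{w, u} \<notin> F"
        proof
          assume "{w, u} \<in> F"
          then have "u = v \<and> \<not> leaf V E w" using Fchar[OF u(2)] wv by auto
          moreover then have "adj E v w" using adj_symD[OF u(2)] by simp
          ultimately show False using False by blast
        qed
        then show ?thesis using A u by blast
      qed
    qed
  qed
  have main: "\<exists>g. TRDF V E g \<and> sum g V < sum h V" if h: "TRDF V ?E2 h" for h
  proof -
    have T2: "\<And>w. w\<in>V \<Longrightarrow> h w = 0 \<Longrightarrow> (\<exists>u\<in>V. adj ?E2 w u \<and> h u = 2)"
     and T3: "\<And>w. w\<in>V \<Longrightarrow> h w > 0 \<Longrightarrow> (\<exists>u\<in>V. adj ?E2 w u \<and> h u > 0)"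
     and T1: "\<And>w. w\<in>V \<Longrightarrow> h w \<le> 2"
      using h unfolding TRDF_def by auto
    have st: "\<forall>u. adj ?E2 v u \<longrightarrow> u \<in> ?S"
    proof (intro allI impI)
      fix u assume "adj ?E2 v u"
      then have "adj E v u" "{v, u} \<notin> F" using A by auto
      then show "u \<in> ?S" using Fchar[of v u] by auto
    qed
    have st2: "\<forall>l\<in>?S. l \<in> V \<and> adj ?E2 l v \<and> (\<forall>u. adj ?E2 l u \<longrightarrow> u = v)"
    proof
      fix l assume l: "l \<in> ?S"
      have lV: "l \<in> V" using l adj_in_V[OF g] by blast
      have lx: "adj E v l" "leaf V E l" using l by auto
      have lv: "adj E l v" using lx(1) by (rule adj_symD)
      have "l \<noteq> v" using lx(1) unfolding adj_def by auto
      then have "{l, v} \<notin> F" using Fchar[OF lv] lx(2) by auto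
      then have l2: "adj ?E2 l v" using A lv by blast
      have l3: "\<forall>u. adj ?E2 l u \<longrightarrow> u = v" using S_nb l A by blast
      show "l \<in> V \<and> adj ?E2 l v \<and> (\<forall>u. adj ?E2 l u \<longrightarrow> u = v)" using lV l2 l3 by blast
    qed
    have l1S: "l1 \<in> ?S" "l2 \<in> ?S" using l12 by auto
    obtain m1 m2 where m: "m1 \<in> ?S" "m2 \<in> ?S" "m1 \<noteq> m2" "h v + h m1 + h m2 \<ge> 3"
      using star[OF h vV st st2 l1S l12(1)] by blast
    have y_nb2: "u = x" if "adj ?E2 y u" for u using y_nb that A by blast
    have hxy: "h x + h y \<ge> 2"
    proof (cases "h y = 0")
      case True
      then obtain u where u: "adj ?E2 y u" "h u = 2" using T2 yV by blast
      have "u = x" using u(1) by (rule y_nb2)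
      then show ?thesis using u by simp
    next
      case False
      then obtain u where u: "adj ?E2 y u" "h u > 0" using T3 yV by blast
      have "u = x" using u(1) by (rule y_nb2)
      then show ?thesis using u False by simp
    qed
    have mS: "adj E v m1" "adj E v m2" "leaf V E m1" "leaf V E m2" using m by auto
    have vm: "v \<noteq> m1" "v \<noteq> m2" using mS unfolding adj_def by auto
    have xm: "x \<noteq> m1" "x \<noteq> m2" using mS xnl by auto
    have xy': "x \<noteq> y" using xy unfolding adj_def by auto
    have my: "m1 \<noteq> y" "m2 \<noteq> y"
    proof -
      show "m1 \<noteq> y"
      proof
        assume "m1 = y"
        then have "adj E y v" using adj_symD[OF mS(1)] by simp
        then show False using y_nb vnx by auto
      qed
      show "m2 \<noteq> y"
      proof
        assume "m2 = y"
        then have "adj E y v" using adj_symD[OF mS(2)] by simp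
        then show False using y_nb vnx by auto
      qed
    qed
    define g where "g = (\<lambda>w. if w = v \<or> w = x then 2 else if w = m1 \<or> w = m2 \<or> w = y then 0 else h w)"
    let ?D = "{v, x, m1, m2, y}"
    have DV: "?D \<subseteq> V" using xV vV yV m adj_in_V[OF g] by blast
    have mnb: "u = v" if i: "i \<in> {m1, m2}" and ui: "adj ?E2 u i" for i u
    proof -
      have "adj ?E2 i u" using ui by (rule adj_symD)
      moreover have "i \<in> ?S" using i m by blast
      ultimately show "u = v" using st2 by blast
    qed
    have ynb: "u = x" if ui: "adj ?E2 u y" for u
    proof -
      have "adj ?E2 y u" using ui by (rule adj_symD)
      then show "u = x" by (rule y_nb2)
    qed
    have gT: "TRDF V E g"
    proof (rule patch[OF h, of E _ ?D])
      show "\<And>a b. adj ?E2 a b \<Longrightarrow> adj E a b" using A by blast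
      show "\<forall>w\<in>V. g w \<le> 2" using T1 unfolding g_def by auto
      show "\<forall>w\<in>V-?D. g w = h w" unfolding g_def by auto
      show "\<forall>w\<in>V-?D. \<forall>u\<in>V. adj ?E2 w u \<longrightarrow> h u \<le> g u"
      proof (intro ballI impI)
        fix w u assume w: "w \<in> V - ?D" and u: "u \<in> V" and wu: "adj ?E2 w u"
        have "u \<noteq> m1" "u \<noteq> m2" using mnb[of u w] wu w by auto
        moreover have "u \<noteq> y" using ynb[of w] wu w by auto
        ultimately show "h u \<le> g u" using T1[OF u] unfolding g_def by auto
      qed
      have xv: "adj E x v" by (rule adj_symD[OF vx])
      have mx: "adj E m1 v" "adj E m2 v" using adj_symD[OF mS(1)] adj_symD[OF mS(2)] by auto
      have gv: "g v = 2" "g x = 2" unfolding g_def by auto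
      show "\<forall>w\<in>?D\<inter>V. (g w = 0 \<longrightarrow> (\<exists>u\<in>V. adj E w u \<and> g u = 2)) \<and> (g w > 0 \<longrightarrow> (\<exists>u\<in>V. adj E w u \<and> g u > 0))"
      proof
        fix w assume w: "w \<in> ?D \<inter> V"
        then have "w = v \<or> w = x \<or> w = m1 \<or> w = m2 \<or> w = y" by auto
        then show "(g w = 0 \<longrightarrow> (\<exists>u\<in>V. adj E w u \<and> g u = 2)) \<and> (g w > 0 \<longrightarrow> (\<exists>u\<in>V. adj E w u \<and> g u > 0))"
        proof (elim disjE)
          assume "w = v"
          moreover have "\<exists>u\<in>V. adj E v u \<and> g u > 0" using vx xV gv by auto
          ultimately show ?thesis using gv by auto
        next
          assume "w = x"
          moreover have "\<exists>u\<in>V. adj E x u \<and> g u > 0" using xv vV gv by auto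
          ultimately show ?thesis using gv by auto
        next
          assume a: "w = m1"
          have "g w = 0" using a vm xm unfolding g_def by auto
          moreover have "\<exists>u\<in>V. adj E w u \<and> g u = 2" using a mx vV gv by auto
          ultimately show ?thesis by auto
        next
          assume a: "w = m2"
          have "g w = 0" using a vm xm unfolding g_def by auto
          moreover have "\<exists>u\<in>V. adj E w u \<and> g u = 2" using a mx vV gv by auto
          ultimately show ?thesis by auto
        next
          assume a: "w = y"
          have "g w = 0" using a yv xy' unfolding g_def by auto
          moreover have "\<exists>u\<in>V. adj E w u \<and> g u = 2" using a yx xV gv by auto
          ultimately show ?thesis by auto
        qed
      qed
    qed
    have fin: "finite V" using g unfolding graph_def by auto
    have eqo: "\<forall>w\<in>V-?D. g w = h w" unfolding g_def by auto
    have "sum g V + sum h ?D = sum h V + sum g ?D"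
      using sum_change[OF fin DV eqo] .
    moreover have "sum h ?D = h v + h x + h m1 + h m2 + h y"
      using vnx vm xm m(3) my yv xy' by simp
    moreover have "sum g ?D = 4"
      using vnx vm xm m(3) my yv xy' unfolding g_def by simp
    ultimately have "sum g V < sum h V" using m(4) hxy by linarith
    then show ?thesis using gT by blast
  qed
  have "gamma_tR V E < gamma_tR V ?E2" using gamma_increase[OF noiso main] by blast
  then show ?thesis unfolding bad_set_def F_def[symmetric] using noiso FE by blast
qed




lemma two_elems: "2 \<le> card A \<Longrightarrow> \<exists>a\<in>A. \<exists>b\<in>A. a \<noteq> b"
proof -
  assume c: "2 \<le> card A"
  then have fin: "finite A" by (metis card.infinite not_numeral_le_zero)
  then obtain a where a: "a \<in> A" using c by fastforce
  have "card (A - {a}) \<ge> 1" using c a fin by (simp add: card_Diff_singleton)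
  then have "A - {a} \<noteq> {}" by (metis card.empty not_one_le_zero)
  then obtain b where "b \<in> A - {a}" by blast
  then show ?thesis using a by blast
qed

lemma one_elem: "1 \<le> card A \<Longrightarrow> \<exists>a. a\<in>A"
proof -
  assume "1 \<le> card A"
  then have "A \<noteq> {}" by auto
  then show ?thesis by blast
qed

lemma card_one_eq: "card A = 1 \<Longrightarrow> a \<in> A \<Longrightarrow> b \<in> A \<Longrightarrow> a = b"
  by (metis card_1_singletonE singletonD)

lemma tree_hn:
  assumes t: "tree V E" and "v \<in> V" "x \<in> V" "v \<noteq> x"
  shows "\<forall>w\<in>V. \<exists>u\<in>V. adj E w u"
proof
  fix w assume w: "w \<in> V"
  define z where "z = (if w = v then x else v)"
  have zV: "z \<in> V" "z \<noteq> w" using assms unfolding z_def by auto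
  obtain P where P: "walk V E P" "hd P = w" "last P = z"
    using t w zV unfolding tree_def connected_graph_def by blast
  have "length P \<ge> 2"
  proof (rule ccontr)
    assume "\<not> length P \<ge> 2"
    moreover have "P \<noteq> []" using P walk_def by auto
    ultimately obtain c where "P = [c]" by (cases P; cases "tl P"; auto)
    then show False using P zV by auto
  qed
  then have "adj E (P ! 0) (P ! 1)" "P ! 1 \<in> V" using P unfolding walk_def by auto
  moreover have "P ! 0 = w" using P \<open>length P \<ge> 2\<close> by (cases P) auto
  ultimately show "\<exists>u\<in>V. adj E w u" by auto
qed

lemma bad_le: "bad_set V E F \<Longrightarrow> b_tR V E \<le> enat (card F)"
  unfolding b_tR_def by (auto intro: Least_le)

lemma bad_card_pos: "graph V E \<Longrightarrow> bad_set V E F \<Longrightarrow> card F \<noteq> 0"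
proof
  assume g: "graph V E" and b: "bad_set V E F" and c: "card F = 0"
  have "finite F" using b graph_finite_E[OF g] unfolding bad_set_def by (auto intro: finite_subset)
  then have "F = {}" using c by auto
  then show False using b unfolding bad_set_def by auto
qed

lemma bad_eq1: "graph V E \<Longrightarrow> bad_set V E F \<Longrightarrow> card F = 1 \<Longrightarrow> b_tR V E = 1"
proof -
  assume g: "graph V E" and b: "bad_set V E F" and c: "card F = 1"
  have "(LEAST k. \<exists>E'. bad_set V E E' \<and> card E' = k) = 1"
  proof (rule Least_equality)
    show "\<exists>E'. bad_set V E E' \<and> card E' = 1" using b c by blast
    show "\<And>y. \<exists>E'. bad_set V E E' \<and> card E' = y \<Longrightarrow> 1 \<le> y"
      using bad_card_pos[OF g] by fastforce
  qed
  then show ?thesis using b unfolding b_tR_def by (auto simp: one_enat_def)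
qed

lemma part1:
  assumes t: "tree V E" and r: "r \<in> V" and x: "x \<in> V"
    and ch: "\<forall>y. child V E r x y \<longrightarrow> leaf V E y" and cv: "child V E r v x"
    and ki: "card {u \<in> nbrs V E v. leaf V E u} \<ge> 1"
    and ri: "card {u \<in> nbrs V E x. leaf V E u} \<ge> 2"
  shows "b_tR V E = 1"
proof -
  have g: "graph V E" using t unfolding tree_def by auto
  have vx: "adj E v x" and vV: "v \<in> V" using cv unfolding child_def by auto
  have vnx: "v \<noteq> x" using vx unfolding adj_def by auto
  obtain a where a: "a \<in> nbrs V E v" "leaf V E a" using one_elem[OF ki] by blast
  have va: "adj E v a" using a unfolding nbrs_def by auto
  obtain l1 l2 where l: "l1 \<in> nbrs V E x" "leaf V E l1" "l2 \<in> nbrs V E x" "leaf V E l2" "l1 \<noteq> l2"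
    using two_elems[OF ri] by blast
  have xl: "adj E x l1" "adj E x l2" using l unfolding nbrs_def by auto
  have fin: "\<And>w. finite (nbrs V E w)" using g unfolding graph_def nbrs_def by auto
  have xnl: "\<not> leaf V E x"
  proof
    assume "leaf V E x"
    then have "card (nbrs V E x) = 1" unfolding leaf_def deg_def by auto
    then show False using l(1,3,5) card_one_eq by metis
  qed
  have ax: "a \<noteq> x" using a xnl by auto
  have lv: "l1 \<noteq> v" "l2 \<noteq> v"
  proof -
    have "x \<in> nbrs V E v" using vx x unfolding nbrs_def by auto
    then have "\<not> leaf V E v"
      using a(1) ax card_one_eq unfolding leaf_def deg_def by metis
    then show "l1 \<noteq> v" "l2 \<noteq> v" using l by auto
  qed
  have xn: "\<forall>u. adj E x u \<longrightarrow> u \<noteq> v \<longrightarrow> leaf V E u"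
  proof (intro allI impI)
    fix u assume "adj E x u" "u \<noteq> v"
    then have "child V E r x u" by (rule child_structure[OF t r cv])
    then show "leaf V E u" using ch by blast
  qed
  have hn: "\<forall>w\<in>V. \<exists>u\<in>V. adj E w u" using tree_hn[OF t vV x vnx] .
  have b: "bad_set V E {{v, x}}" using core1[OF g hn vx va a(2) ax l(5) xl lv xn] .
  show ?thesis using bad_eq1[OF g b] vnx by simp
qed

lemma part2:
  assumes t: "tree V E" and r: "r \<in> V" and x: "x \<in> V"
    and ex: "\<exists>y. child V E r x y"
    and ch: "\<forall>y. child V E r x y \<longrightarrow> leaf V E y" and cv: "child V E r v x"
    and ki: "card {u \<in> nbrs V E v. leaf V E u} \<ge> 2"
  shows "b_tR V E \<le> enat (deg V E v - card {u \<in> nbrs V E v. leaf V E u})"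
proof -
  have g: "graph V E" using t unfolding tree_def by auto
  have vx: "adj E v x" and vV: "v \<in> V" using cv unfolding child_def by auto
  have vnx: "v \<noteq> x" using vx unfolding adj_def by auto
  obtain y where y: "child V E r x y" using ex by blast
  have ly: "leaf V E y" using ch y by blast
  have xy: "adj E x y" using y unfolding child_def by auto
  have yv: "y \<noteq> v" using y cv unfolding child_def by auto
  obtain l1 l2 where l: "l1 \<in> nbrs V E v" "leaf V E l1" "l2 \<in> nbrs V E v" "leaf V E l2" "l1 \<noteq> l2"
    using two_elems[OF ki] by blast
  have vl: "adj E v l1" "adj E v l2" using l unfolding nbrs_def by auto
  have xnl: "\<not> leaf V E x"
  proof
    assume "leaf V E x"
    then have "card (nbrs V E x) = 1" unfolding leaf_def deg_def by auto
    moreover have "v \<in> nbrs V E x" "y \<in> nbrs V E x"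
      using adj_symD[OF vx] xy vV adj_in_V[OF g xy] unfolding nbrs_def by auto
    ultimately show False using yv card_one_eq by metis
  qed
  have hn: "\<forall>w\<in>V. \<exists>u\<in>V. adj E w u" using tree_hn[OF t vV x vnx] .
  have b: "bad_set V E {{v, w} | w. w \<in> nbrs V E v \<and> \<not> leaf V E w}"
    using core2[OF g hn vx xy ly yv xnl l(5) vl l(2) l(4)] .
  have fin: "finite (nbrs V E v)" using g unfolding graph_def nbrs_def by auto
  define X where "X = nbrs V E v - {u \<in> nbrs V E v. leaf V E u}"
  have eq: "{{v, w} | w. w \<in> nbrs V E v \<and> \<not> leaf V E w} = (\<lambda>w. {v, w}) ` X"
    unfolding X_def by auto
  have "card ((\<lambda>w. {v, w}) ` X) \<le> card X" by (rule card_image_le) (use fin in \<open>simp add: X_def\<close>)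
  also have "card X = deg V E v - card {u \<in> nbrs V E v. leaf V E u}"
    unfolding deg_def X_def using fin by (subst card_Diff_subset) auto
  finally have c: "card {{v, w} | w. w \<in> nbrs V E v \<and> \<not> leaf V E w} \<le> deg V E v - card {u \<in> nbrs V E v. leaf V E u}"
    unfolding eq .
  then have "enat (card {{v, w} | w. w \<in> nbrs V E v \<and> \<not> leaf V E w}) \<le> enat (deg V E v - card {u \<in> nbrs V E v. leaf V E u})"
    by simp
  then show ?thesis by (rule order_trans[OF bad_le[OF b]])
qed




lemma spider_adj:
  assumes "3 \<le> t" "2 \<le> k" "k \<le> t - 1"
  shows "adj (spider_E k t) a b \<longleftrightarrow>
     (a = 0 \<and> t - k < b \<and> b \<le> t) \<or> (b = 0 \<and> t - k < a \<and> a \<le> t)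
   \<or> (a = 0 \<and> t < b \<and> b \<le> t + (t - k)) \<or> (b = 0 \<and> t < a \<and> a \<le> t + (t - k))
   \<or> (1 \<le> b \<and> b \<le> t - k \<and> a = t + b) \<or> (1 \<le> a \<and> a \<le> t - k \<and> b = t + a)"
proof
  assume "adj (spider_E k t) a b"
  then have "a \<noteq> b" "{a, b} \<in> spider_E k t" unfolding adj_def by auto
  then show "(a = 0 \<and> t - k < b \<and> b \<le> t) \<or> (b = 0 \<and> t - k < a \<and> a \<le> t)
   \<or> (a = 0 \<and> t < b \<and> b \<le> t + (t - k)) \<or> (b = 0 \<and> t < a \<and> a \<le> t + (t - k))
   \<or> (1 \<le> b \<and> b \<le> t - k \<and> a = t + b) \<or> (1 \<le> a \<and> a \<le> t - k \<and> b = t + a)"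
  proof -
    have mem: "(\<exists>i. {a, b} = {0, i} \<and> t - k < i \<and> i \<le> t) \<or> (\<exists>i. {a, b} = {0, t + i} \<and> 1 \<le> i \<and> i \<le> t - k)
      \<or> (\<exists>i. {a, b} = {t + i, i} \<and> 1 \<le> i \<and> i \<le> t - k)"
      using \<open>{a, b} \<in> spider_E k t\<close> unfolding spider_E_def by (simp only: Un_iff mem_Collect_eq disj_assoc)
    from mem consider
      (c1) i where "{a, b} = {0, i}" "t - k < i" "i \<le> t"
    | (c2) i where "{a, b} = {0, t + i}" "1 \<le> i" "i \<le> t - k"
    | (c3) i where "{a, b} = {t + i, i}" "1 \<le> i" "i \<le> t - k"
      unfolding spider_E_def by blast
    then show ?thesis
    proof cases
      case c1
      then have "(a = 0 \<and> b = i) \<or> (a = i \<and> b = 0)" by (simp add: doubleton_eq_iff)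
      then show ?thesis using c1 by (elim disjE conjE) simp_all
    next
      case c2
      then have "(a = 0 \<and> b = t + i) \<or> (a = t + i \<and> b = 0)" by (simp add: doubleton_eq_iff)
      then show ?thesis using c2 by (elim disjE conjE) simp_all
    next
      case c3
      then have "(a = t + i \<and> b = i) \<or> (a = i \<and> b = t + i)" by (simp add: doubleton_eq_iff)
      then show ?thesis using c3 by (elim disjE conjE) simp_all
    qed
  qed
next
  assume h: "(a = 0 \<and> t - k < b \<and> b \<le> t) \<or> (b = 0 \<and> t - k < a \<and> a \<le> t)
   \<or> (a = 0 \<and> t < b \<and> b \<le> t + (t - k)) \<or> (b = 0 \<and> t < a \<and> a \<le> t + (t - k))
   \<or> (1 \<le> b \<and> b \<le> t - k \<and> a = t + b) \<or> (1 \<le> a \<and> a \<le> t - k \<and> b = t + a)"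
  have ne: "a \<noteq> b" using h assms by auto
  have "{a, b} \<in> spider_E k t"
    using h
  proof (elim disjE)
    assume "a = 0 \<and> t - k < b \<and> b \<le> t" then show ?thesis unfolding spider_E_def by blast
  next
    assume "b = 0 \<and> t - k < a \<and> a \<le> t" then show ?thesis unfolding spider_E_def by (auto simp: insert_commute)
  next
    assume a: "a = 0 \<and> t < b \<and> b \<le> t + (t - k)"
    then have "1 \<le> b - t \<and> b - t \<le> t - k \<and> {a, b} = {0, t + (b - t)}" by auto
    then show ?thesis unfolding spider_E_def by blast
  next
    assume a: "b = 0 \<and> t < a \<and> a \<le> t + (t - k)"
    then have "1 \<le> a - t \<and> a - t \<le> t - k \<and> {a, b} = {0, t + (a - t)}" by auto
    then show ?thesis unfolding spider_E_def by blast
  next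
    assume "1 \<le> b \<and> b \<le> t - k \<and> a = t + b" then show ?thesis unfolding spider_E_def by blast
  next
    assume "1 \<le> a \<and> a \<le> t - k \<and> b = t + a" then show ?thesis unfolding spider_E_def by (auto simp: insert_commute)
  qed
  then show "adj (spider_E k t) a b" using ne unfolding adj_def by auto
qed




context
  fixes k t :: nat
  assumes kt: "3 \<le> t" "2 \<le> k" "k \<le> t - 1"
begin

lemma sp_adj: "adj (spider_E k t) a b \<longleftrightarrow>
     (a = 0 \<and> t - k < b \<and> b \<le> t) \<or> (b = 0 \<and> t - k < a \<and> a \<le> t)
   \<or> (a = 0 \<and> t < b \<and> b \<le> t + (t - k)) \<or> (b = 0 \<and> t < a \<and> a \<le> t + (t - k))
   \<or> (1 \<le> b \<and> b \<le> t - k \<and> a = t + b) \<or> (1 \<le> a \<and> a \<le> t - k \<and> b = t + a)"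
  using spider_adj[OF kt] .

lemma nb_leaf: "t - k < l \<Longrightarrow> l \<le> t \<Longrightarrow> adj (spider_E k t) l u \<longleftrightarrow> u = 0"
  unfolding sp_adj using kt by auto

lemma nb_end: "1 \<le> i \<Longrightarrow> i \<le> t - k \<Longrightarrow> adj (spider_E k t) i u \<longleftrightarrow> u = t + i"
  unfolding sp_adj using kt by auto

lemma nb_mid: "1 \<le> i \<Longrightarrow> i \<le> t - k \<Longrightarrow> adj (spider_E k t) (t + i) u \<longleftrightarrow> u = 0 \<or> u = i"
  unfolding sp_adj using kt by auto

lemma nb_0: "adj (spider_E k t) 0 u \<longleftrightarrow> (t - k < u \<and> u \<le> t) \<or> (t < u \<and> u \<le> t + (t - k))"
  unfolding sp_adj using kt by auto

lemma sp_class: "u \<in> spider_V k t \<Longrightarrow>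
   u = 0 \<or> (1 \<le> u \<and> u \<le> t - k) \<or> (t - k < u \<and> u \<le> t) \<or> (t < u \<and> u \<le> t + (t - k))"
  unfolding spider_V_def by auto

lemma sp_mem: "u \<in> spider_V k t \<longleftrightarrow> u \<le> t + (t - k)"
  unfolding spider_V_def by auto

lemma sp_graph: "graph (spider_V k t) (spider_E k t)"
  unfolding graph_def
proof (intro conjI ballI)
  show "finite (spider_V k t)" unfolding spider_V_def by simp
  fix e assume "e \<in> spider_E k t"
  then have mem: "(\<exists>i. e = {0, i} \<and> t - k < i \<and> i \<le> t) \<or> (\<exists>i. e = {0, t + i} \<and> 1 \<le> i \<and> i \<le> t - k)
      \<or> (\<exists>i. e = {t + i, i} \<and> 1 \<le> i \<and> i \<le> t - k)"
    unfolding spider_E_def by (simp only: Un_iff mem_Collect_eq disj_assoc)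
  then show "\<exists>u v. e = {u, v} \<and> u \<noteq> v \<and> u \<in> spider_V k t \<and> v \<in> spider_V k t"
  proof (elim disjE exE conjE)
    fix i assume "e = {0, i}" "t - k < i" "i \<le> t"
    then show ?thesis unfolding sp_mem by (intro exI[of _ 0] exI[of _ i]) auto
  next
    fix i assume "e = {0, t + i}" "1 \<le> i" "i \<le> t - k"
    then show ?thesis unfolding sp_mem by (intro exI[of _ 0] exI[of _ "t + i"]) auto
  next
    fix i assume "e = {t + i, i}" "1 \<le> i" "i \<le> t - k"
    then show ?thesis unfolding sp_mem using kt by (intro exI[of _ "t + i"] exI[of _ i]) auto
  qed
qed

lemma leaf_SL: assumes "t - k < l" "l \<le> t" shows "leaf (spider_V k t) (spider_E k t) l"
proof -
  have "nbrs (spider_V k t) (spider_E k t) l = {0}"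
    unfolding nbrs_def nb_leaf[OF assms] sp_mem by auto
  moreover have "l \<in> spider_V k t" unfolding sp_mem using assms by auto
  ultimately show ?thesis unfolding leaf_def deg_def by simp
qed

lemma leaf_end: assumes "1 \<le> i" "i \<le> t - k" shows "leaf (spider_V k t) (spider_E k t) i"
proof -
  have "nbrs (spider_V k t) (spider_E k t) i = {t + i}"
    unfolding nbrs_def nb_end[OF assms] sp_mem using assms by auto
  moreover have "i \<in> spider_V k t" unfolding sp_mem using assms by auto
  ultimately show ?thesis unfolding leaf_def deg_def by simp
qed

lemma nleaf_mid: assumes "1 \<le> i" "i \<le> t - k" shows "\<not> leaf (spider_V k t) (spider_E k t) (t + i)"
proof -
  have "nbrs (spider_V k t) (spider_E k t) (t + i) = {0, i}"
    unfolding nbrs_def nb_mid[OF assms] sp_mem using assms by auto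
  moreover have "i \<noteq> 0" using assms by auto
  ultimately show ?thesis unfolding leaf_def deg_def by simp
qed

lemma sp_hn: "\<forall>w\<in>spider_V k t. \<exists>u\<in>spider_V k t. adj (spider_E k t) w u"
proof
  fix w assume w: "w \<in> spider_V k t"
  have tV: "t \<in> spider_V k t" "0 \<in> spider_V k t" unfolding sp_mem by auto
  from sp_class[OF w] show "\<exists>u\<in>spider_V k t. adj (spider_E k t) w u"
  proof (elim disjE conjE)
    assume w0: "w = 0"
    have "adj (spider_E k t) 0 t" unfolding nb_0 using kt by auto
    then show ?thesis using tV w0 by blast
  next
    assume a: "1 \<le> w" "w \<le> t - k"
    have "t + w \<in> spider_V k t" unfolding sp_mem using a by auto
    moreover have "adj (spider_E k t) w (t + w)" unfolding nb_end[OF a] by simp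
    ultimately show ?thesis by blast
  next
    assume a: "t - k < w" "w \<le> t"
    then show ?thesis unfolding nb_leaf[OF a] using tV by auto
  next
    assume a: "t < w" "w \<le> t + (t - k)"
    then have "adj (spider_E k t) 0 w" unfolding nb_0 by auto
    then have "adj (spider_E k t) w 0" by (rule adj_symD)
    then show ?thesis using tV by auto
  qed
qed

lemma F0_eq: "{{0, w} | w. w \<in> nbrs (spider_V k t) (spider_E k t) 0 \<and> \<not> leaf (spider_V k t) (spider_E k t) w}
   = (\<lambda>w. {0, w}) ` {t + 1 .. t + (t - k)}"
proof -
  have "w \<in> nbrs (spider_V k t) (spider_E k t) 0 \<and> \<not> leaf (spider_V k t) (spider_E k t) w
     \<longleftrightarrow> w \<in> {t + 1 .. t + (t - k)}" for w
  proof
    assume a: "w \<in> nbrs (spider_V k t) (spider_E k t) 0 \<and> \<not> leaf (spider_V k t) (spider_E k t) w"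
    then have "(t - k < w \<and> w \<le> t) \<or> (t < w \<and> w \<le> t + (t - k))" unfolding nbrs_def nb_0 by auto
    moreover have "\<not> (t - k < w \<and> w \<le> t)" using a leaf_SL by blast
    ultimately show "w \<in> {t + 1 .. t + (t - k)}" by auto
  next
    assume a: "w \<in> {t + 1 .. t + (t - k)}"
    then have i: "1 \<le> w - t" "w - t \<le> t - k" and w: "w = t + (w - t)" by auto
    have "\<not> leaf (spider_V k t) (spider_E k t) w" using nleaf_mid[OF i] w by metis
    moreover have "w \<in> nbrs (spider_V k t) (spider_E k t) 0" unfolding nbrs_def nb_0 sp_mem using a by auto
    ultimately show "w \<in> nbrs (spider_V k t) (spider_E k t) 0 \<and> \<not> leaf (spider_V k t) (spider_E k t) w" by blast
  qed
  then show ?thesis by blast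
qed

lemma F0_card: "card ((\<lambda>w. {0::nat, w}) ` {t + 1 .. t + (t - k)}) = t - k"
proof -
  have "inj_on (\<lambda>w. {0::nat, w}) {t + 1 .. t + (t - k)}"
    by (rule inj_onI) (auto simp: doubleton_eq_iff)
  then show ?thesis by (simp add: card_image)
qed

lemma sp_upper: "bad_set (spider_V k t) (spider_E k t) ((\<lambda>w. {0, w}) ` {t + 1 .. t + (t - k)})"
proof -
  have m1: "1 \<le> t - k" "1 \<le> (1::nat)" using kt by auto
  have vx: "adj (spider_E k t) 0 (t + 1)" unfolding nb_0 using kt by auto
  have xy: "adj (spider_E k t) (t + 1) 1" unfolding nb_mid[OF m1(2) m1(1)] by simp
  have ly: "leaf (spider_V k t) (spider_E k t) 1" using leaf_end[OF m1(2) m1(1)] .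
  have xnl: "\<not> leaf (spider_V k t) (spider_E k t) (t + 1)" using nleaf_mid[OF m1(2) m1(1)] .
  have l1: "t - k < t" "t \<le> t" and l2: "t - k < t - 1" "t - 1 \<le> t" using kt by auto
  have vl: "adj (spider_E k t) 0 t" "adj (spider_E k t) 0 (t - 1)" unfolding nb_0 using l1 l2 by auto
  have "t \<noteq> t - 1" using kt by auto
  from core2[OF sp_graph sp_hn vx xy ly _ xnl this vl leaf_SL[OF l1] leaf_SL[OF l2]]
  show ?thesis unfolding F0_eq by simp
qed

lemma sumV: "sum g (spider_V k t) = g 0 + sum g {1..t - k} + sum g {t - k + 1..t} + sum (\<lambda>i. g (t + i)) {1..t - k}"
proof -
  let ?m = "t - k"
  have e1: "sum g {0..t + ?m} = sum g {0..t} + sum g {t + 1..t + ?m}" by (rule sum.ub_add_nat) simp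
  have tm: "t = ?m + (t - ?m)" using kt by auto
  have e2: "sum g {0..?m + (t - ?m)} = sum g {0..?m} + sum g {?m + 1..?m + (t - ?m)}" by (rule sum.ub_add_nat) simp
  have e3: "sum g {0..?m} = g 0 + sum g {Suc 0..?m}" by (rule sum.atLeast_Suc_atMost) simp
  have e4: "sum g {1 + t..?m + t} = sum (\<lambda>i. g (i + t)) {1..?m}" by (rule sum.shift_bounds_cl_nat_ivl)
  have "sum g {t + 1..t + ?m} = sum (\<lambda>i. g (t + i)) {1..?m}" using e4 by (simp add: add.commute)
  then show ?thesis unfolding spider_V_def using e1 e2 e3 tm by simp
qed

lemma sp_gamma_lb:
  assumes g: "TRDF (spider_V k t) (spider_E k t) g"
  shows "2 + 2 * (t - k) \<le> sum g (spider_V k t)"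
proof -
  let ?V = "spider_V k t" and ?E = "spider_E k t"
  have T2: "\<And>w. w\<in>?V \<Longrightarrow> g w = 0 \<Longrightarrow> (\<exists>u\<in>?V. adj ?E w u \<and> g u = 2)"
   and T3: "\<And>w. w\<in>?V \<Longrightarrow> g w > 0 \<Longrightarrow> (\<exists>u\<in>?V. adj ?E w u \<and> g u > 0)"
    using g unfolding TRDF_def by auto
  have leg: "g i + g (t + i) \<ge> 2" if i: "i \<in> {1..t - k}" for i
  proof -
    have i1: "1 \<le> i" "i \<le> t - k" using i by auto
    have iV: "i \<in> ?V" unfolding sp_mem using i1 by auto
    show ?thesis
    proof (cases "g i = 0")
      case True
      then obtain u where "adj ?E i u" "g u = 2" using T2 iV by blast
      then show ?thesis using nb_end[OF i1] by auto
    next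
      case False
      then obtain u where "adj ?E i u" "g u > 0" using T3 iV by blast
      then show ?thesis using nb_end[OF i1] False by auto
    qed
  qed
  have cen: "g 0 + g t \<ge> 2"
  proof -
    have l1: "t - k < t" "t \<le> t" using kt by auto
    have tV: "t \<in> ?V" unfolding sp_mem by auto
    show ?thesis
    proof (cases "g t = 0")
      case True
      then obtain u where "adj ?E t u" "g u = 2" using T2 tV by blast
      then show ?thesis using nb_leaf[OF l1] by auto
    next
      case False
      then obtain u where "adj ?E t u" "g u > 0" using T3 tV by blast
      then show ?thesis using nb_leaf[OF l1] False by auto
    qed
  qed
  have "g t \<le> sum g {t - k + 1..t}" by (rule member_le_sum) (use kt in auto)
  moreover have "sum (\<lambda>_. 2) {1..t - k} \<le> sum (\<lambda>i. g i + g (t + i)) {1..t - k}"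
    by (rule sum_mono) (rule leg)
  moreover have "sum (\<lambda>i. g i + g (t + i)) {1..t - k} = sum g {1..t - k} + sum (\<lambda>i. g (t + i)) {1..t - k}"
    by (rule sum.distrib)
  moreover have "sum (\<lambda>_. 2::nat) {1..t - k} = 2 * (t - k)" by simp
  ultimately show ?thesis unfolding sumV using cen by linarith
qed

lemma sp_lower:
  assumes b: "bad_set (spider_V k t) (spider_E k t) E'"
  shows "t - k \<le> card E'"
proof (rule ccontr)
  let ?V = "spider_V k t" and ?E = "spider_E k t" and ?m = "t - k"
  let ?M = "{t + 1 .. t + ?m}"
  let ?I = "(\<lambda>w. {0::nat, w}) ` ?M"
  assume "\<not> t - k \<le> card E'"
  then have lt: "card E' < ?m" by simp
  have sub: "E' \<subseteq> ?E" and noiso: "no_isolated ?V (?E - E')"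
    and gam: "gamma_tR ?V ?E < gamma_tR ?V (?E - E')" using b unfolding bad_set_def by auto
  have A: "adj (?E - E') p q \<longleftrightarrow> adj ?E p q \<and> {p, q} \<notin> E'" for p q by (simp add: adj_diff)
  have subI: "E' \<subseteq> ?I"
  proof
    fix e assume eE': "e \<in> E'"
    then have "e \<in> ?E" using sub by blast
    then have mem: "(\<exists>i. e = {0, i} \<and> t - k < i \<and> i \<le> t) \<or> (\<exists>i. e = {0, t + i} \<and> 1 \<le> i \<and> i \<le> t - k)
      \<or> (\<exists>i. e = {t + i, i} \<and> 1 \<le> i \<and> i \<le> t - k)"
      unfolding spider_E_def by (simp only: Un_iff mem_Collect_eq disj_assoc)
    then show "e \<in> ?I"
    proof (elim disjE exE conjE)
      fix i assume e: "e = {0, i}" and i: "t - k < i" "i \<le> t"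
      have iV: "i \<in> ?V" unfolding sp_mem using i by auto
      then obtain u where "adj (?E - E') i u" using noiso unfolding no_isolated_def by blast
      then have "adj ?E i u" "{i, u} \<notin> E'" using A by auto
      then have "u = 0" "{i, u} \<notin> E'" using nb_leaf[OF i] by auto
      then have "e \<notin> E'" using e by (simp add: insert_commute)
      then show ?thesis using eE' by blast
    next
      fix i assume e: "e = {0, t + i}" and i: "1 \<le> i" "i \<le> t - k"
      then show ?thesis by auto
    next
      fix i assume e: "e = {t + i, i}" and i: "1 \<le> i" "i \<le> t - k"
      have iV: "i \<in> ?V" unfolding sp_mem using i by auto
      then obtain u where "adj (?E - E') i u" using noiso unfolding no_isolated_def by blast
      then have "adj ?E i u" "{i, u} \<notin> E'" using A by auto
      then have "u = t + i" "{i, u} \<notin> E'" using nb_end[OF i] by auto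
      then have "e \<notin> E'" using e by (simp add: insert_commute)
      then show ?thesis using eE' by blast
    qed
  qed
  have finE: "finite E'" using sub graph_finite_E[OF sp_graph] by (rule finite_subset)
  have "\<exists>w\<in>?M. {0, w} \<notin> E'"
  proof (rule ccontr)
    assume "\<not> (\<exists>w\<in>?M. {0, w} \<notin> E')"
    then have "?I \<subseteq> E'" by blast
    then have "card ?I \<le> card E'" using finE by (rule card_mono[rotated])
    then show False using lt F0_card by simp
  qed
  then obtain w0 where w0: "w0 \<in> ?M" "{0, w0} \<notin> E'" by blast
  have notI: "{p, q} \<notin> E'" if "p \<noteq> 0" "q \<noteq> 0" for p q
  proof
    assume "{p, q} \<in> E'"
    then have "{p, q} \<in> ?I" using subI by blast
    then obtain w where "{p, q} = {0, w}" by blast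
    then show False using that by (auto simp: doubleton_eq_iff)
  qed
  have notI0: "{p, 0} \<notin> E'" if "p \<le> t" for p
  proof
    assume "{p, 0} \<in> E'"
    then have "{p, 0} \<in> ?I" using subI by blast
    then obtain w where "w \<in> ?M" "{p, 0} = {0, w}" by blast
    then show False using that by (auto simp: doubleton_eq_iff)
  qed
  define f where "f = (\<lambda>u::nat. if u = 0 then 2 else if t - k < u \<and> u \<le> t then 0 else (1::nat))"
  have fT: "TRDF ?V (?E - E') f"
    unfolding TRDF_def
  proof (intro conjI ballI impI)
    fix u assume u: "u \<in> ?V"
    show "f u \<le> 2" unfolding f_def by auto
    {
      assume "f u = 0"
      then have a: "t - k < u" "u \<le> t" unfolding f_def by (auto split: if_splits)
      have "adj ?E u 0" unfolding nb_leaf[OF a] by simp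
      moreover have "{u, 0} \<notin> E'" using notI0 a by auto
      ultimately have "adj (?E - E') u 0" using A by blast
      moreover have "f 0 = 2" "0 \<in> ?V" unfolding f_def sp_mem by auto
      ultimately show "\<exists>w\<in>?V. adj (?E - E') u w \<and> f w = 2" by blast
    }
    {
      assume fu: "f u > 0"
      from sp_class[OF u] show "\<exists>w\<in>?V. adj (?E - E') u w \<and> f w > 0"
      proof (elim disjE conjE)
        assume u0: "u = 0"
        have "adj ?E 0 w0" unfolding nb_0 using w0 by auto
        then have "adj (?E - E') u w0" using A w0 u0 by blast
        moreover have "f w0 > 0" "w0 \<in> ?V" unfolding f_def sp_mem using w0 kt by auto
        ultimately show ?thesis by blast
      next
        assume a: "1 \<le> u" "u \<le> t - k"
        have "adj ?E u (t + u)" unfolding nb_end[OF a] by simp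
        moreover have "{u, t + u} \<notin> E'" using notI a by auto
        ultimately have "adj (?E - E') u (t + u)" using A by blast
        moreover have "f (t + u) > 0" "t + u \<in> ?V" unfolding f_def sp_mem using a kt by auto
        ultimately show ?thesis by blast
      next
        assume a: "t - k < u" "u \<le> t"
        then have "f u = 0" unfolding f_def by auto
        then show ?thesis using fu by simp
      next
        assume a: "t < u" "u \<le> t + (t - k)"
        then have i: "1 \<le> u - t" "u - t \<le> t - k" and ue: "u = t + (u - t)" by auto
        have "adj ?E (t + (u - t)) (u - t)" unfolding nb_mid[OF i] by simp
        then have "adj ?E u (u - t)" using ue by simp
        moreover have "{u, u - t} \<notin> E'" using notI a i by auto
        ultimately have "adj (?E - E') u (u - t)" using A by blast
        moreover have "f (u - t) > 0" "u - t \<in> ?V" unfolding f_def sp_mem using i kt by auto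
        ultimately show ?thesis by blast
      qed
    }
  qed
  have s1: "sum f {1..t - k} = t - k"
  proof -
    have "sum f {1..t - k} = sum (\<lambda>_. 1) {1..t - k}" by (rule sum.cong) (auto simp: f_def)
    then show ?thesis by simp
  qed
  have s2: "sum f {t - k + 1..t} = 0" by (rule sum.neutral) (auto simp: f_def)
  have s3: "sum (\<lambda>i. f (t + i)) {1..t - k} = t - k"
  proof -
    have "sum (\<lambda>i. f (t + i)) {1..t - k} = sum (\<lambda>_. 1) {1..t - k}" by (rule sum.cong) (auto simp: f_def)
    then show ?thesis by simp
  qed
  have fs: "sum f ?V = 2 + 2 * (t - k)" unfolding sumV s1 s2 s3 by (simp add: f_def)
  have "gamma_tR ?V (?E - E') \<le> 2 + 2 * (t - k)" using gamma_le[OF fT] fs by simp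
  moreover obtain g where "TRDF ?V ?E g" "gamma_tR ?V ?E = sum g ?V"
    using gamma_attained sp_hn unfolding no_isolated_def by blast
  then have "2 + 2 * (t - k) \<le> gamma_tR ?V ?E" using sp_gamma_lb by simp
  ultimately show False using gam by simp
qed

lemma sp_main: "b_tR (spider_V k t) (spider_E k t) = enat (t - k)"
proof -
  have "(LEAST c. \<exists>E'. bad_set (spider_V k t) (spider_E k t) E' \<and> card E' = c) = t - k"
  proof (rule Least_equality)
    show "\<exists>E'. bad_set (spider_V k t) (spider_E k t) E' \<and> card E' = t - k"
      using sp_upper F0_card by blast
    show "\<And>y. \<exists>E'. bad_set (spider_V k t) (spider_E k t) E' \<and> card E' = y \<Longrightarrow> t - k \<le> y"
      using sp_lower by blast
  qed
  then show ?thesis using sp_upper unfolding b_tR_def by auto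
qed

end



theorem mainTheorem10:
  shows "(\<forall>(V :: 'a set) E r x v.
            tree V E \<and> r \<in> V \<and> x \<in> V \<and> x \<noteq> r
            \<and> (\<exists>y. child V E r x y)
            \<and> (\<forall>y. child V E r x y \<longrightarrow> leaf V E y)
            \<and> child V E r v x
          \<longrightarrow> (let ki = card {u \<in> nbrs V E v. leaf V E u};
                   ri = card {u \<in> nbrs V E x. leaf V E u}
               in (ki \<ge> 1 \<and> ri \<ge> 2 \<longrightarrow> b_tR V E = 1)
                \<and> (ki \<ge> 2 \<and> ri = 1 \<longrightarrow> b_tR V E \<le> enat (deg V E v - ki))))
       \<and> (\<forall>t k :: nat. t \<ge> 3 \<and> 2 \<le> k \<and> k \<le> t - 1
            \<longrightarrow> b_tR (spider_V k t) (spider_E k t) = enat (t - k))"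
proof (intro conjI allI impI)
  fix V :: "'a set" and E r x v
  assume h: "tree V E \<and> r \<in> V \<and> x \<in> V \<and> x \<noteq> r
            \<and> (\<exists>y. child V E r x y)
            \<and> (\<forall>y. child V E r x y \<longrightarrow> leaf V E y)
            \<and> child V E r v x"
  then have t: "tree V E" and r: "r \<in> V" and x: "x \<in> V" and ex: "\<exists>y. child V E r x y"
    and ch: "\<forall>y. child V E r x y \<longrightarrow> leaf V E y" and cv: "child V E r v x" by auto
  show "let ki = card {u \<in> nbrs V E v. leaf V E u};
                   ri = card {u \<in> nbrs V E x. leaf V E u}
               in (ki \<ge> 1 \<and> ri \<ge> 2 \<longrightarrow> b_tR V E = 1)
                \<and> (ki \<ge> 2 \<and> ri = 1 \<longrightarrow> b_tR V E \<le> enat (deg V E v - ki))"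
    unfolding Let_def
  proof (intro conjI impI)
    assume "1 \<le> card {u \<in> nbrs V E v. leaf V E u} \<and> 2 \<le> card {u \<in> nbrs V E x. leaf V E u}"
    then show "b_tR V E = 1" using part1[OF t r x ch cv] by blast
  next
    assume "2 \<le> card {u \<in> nbrs V E v. leaf V E u} \<and> card {u \<in> nbrs V E x. leaf V E u} = 1"
    then show "b_tR V E \<le> enat (deg V E v - card {u \<in> nbrs V E v. leaf V E u})"
      using part2[OF t r x ex ch cv] by blast
  qed
next
  fix t k :: nat
  assume "3 \<le> t \<and> 2 \<le> k \<and> k \<le> t - 1"
  then show "b_tR (spider_V k t) (spider_E k t) = enat (t - k)" using sp_main by blast
qed

end
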